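(* Let $|v_c\rangle=\frac{1}{\sqrt3}(1,1,1)$ and, for any choice of signs, $|v^{12}\rangle=(\pm\frac{1}{\sqrt3},\pm\sqrt{2/3},0)$ and $|v^{34}\rangle=(\pm\frac{1}{\sqrt3},0,\pm\sqrt{2/3})$ in $\mathbb{R}^3$. Then there do not exist unit vectors $x,y\in\mathbb{R}^3$ satisfying $\langle v_c|x\rangle^2=\tfrac12$, $\langle v^{34}|x\rangle^2=0.69$, $\langle v_c|y\rangle^2=\tfrac12$, $\langle v^{12}|y\rangle^2=0.32$, together with $\langle x|y\rangle\in\{0,1,-1\}$. Equivalently, the choice data of the Ellsberg experiment (preference $0.68/0.32$ for $f_1/f_2$ in state $v^{12}$, $0.31/0.69$ for $f_3/f_4$ in state $v^{34}$, and $0.5/0.5$ for both bets in state $v_c$) cannot be modeled in $\mathbb{R}^3$ by two commuting two-outcome observables $\mathcal{O}_{12}=o_1P_1+o_2P_2$, $\mathcal{O}_{34}=o_3P_3+o_4P_4$ with $P_2,P_4$ of rank one and $P_1=\mathbb{1}-P_2$, $P_3=\mathbb{1}-P_4$ of rank two.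
   Context: $\mathbb{R}^3$ carries its standard Euclidean inner product $\langle\cdot|\cdot\rangle$. *)

theory Defs
  imports "HOL-Analysis.Analysis"
begin

definition v_c :: "real^3" where
  "v_c = vector [1 / sqrt 3, 1 / sqrt 3, 1 / sqrt 3]"

text \<open>Sign choices s1 s2 (resp. s3 s4) range over {1, -1}.\<close>
definition v12 :: "real \<Rightarrow> real \<Rightarrow> real^3" where
  "v12 s1 s2 = vector [s1 / sqrt 3, s2 * sqrt (2/3), 0]"

definition v34 :: "real \<Rightarrow> real \<Rightarrow> real^3" where
  "v34 s3 s4 = vector [s3 / sqrt 3, 0, s4 * sqrt (2/3)]"

end

theory Submission
  imports Defs
begin

lemma stepE:
  fixes x1 x2 x3 b e f P Q R N D :: real
  assumes hb: "b*b = 2" and he: "e*e = 1" and hf: "f*f = 1"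
    and hn: "x1*x1+x2*x2+x3*x3 = 1" and hP: "P = x1+x2+x3"
    and hQ: "Q = x1+f*b*x3" and hR: "R = x1+e*b*x2"
    and hN: "N = 2*P - b*(e*R+f*Q)" and hD: "D = 2 - (e+f)*b"
  shows "2*N*N - N*D*(R+Q) + ((R*R+Q*Q)/2 - 1)*D*D = 0"
proof -
  have "e*b*(R-x1) = (e*e)*(b*b)*x2" using hR by (simp add: algebra_simps)
  hence h2: "e*b*(R-x1) = 2*x2" using he hb by simp
  have "f*b*(Q-x1) = (f*f)*(b*b)*x3" using hQ by (simp add: algebra_simps)
  hence h3: "f*b*(Q-x1) = 2*x3" using hf hb by simp
  have lin: "D*x1 = N"
  proof -
    have "N = 2*x1 + 2*x2 + 2*x3 - e*b*R - f*b*Q" using hN hP by (simp add: algebra_simps)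
    also have "\<dots> = 2*x1 + e*b*(R-x1) + f*b*(Q-x1) - e*b*R - f*b*Q" using h2 h3 by simp
    also have "\<dots> = D*x1" by (simp add: hD algebra_simps)
    finally show ?thesis by simp
  qed
  have q2: "4*(x2*x2) = 2*((R-x1)*(R-x1))"
  proof -
    have "4*(x2*x2) = (e*b*(R-x1))*(e*b*(R-x1))" using h2 by simp
    also have "\<dots> = (e*e)*(b*b)*((R-x1)*(R-x1))" by (simp add: algebra_simps)
    finally show ?thesis using he hb by simp
  qed
  have q3: "4*(x3*x3) = 2*((Q-x1)*(Q-x1))"
  proof -
    have "4*(x3*x3) = (f*b*(Q-x1))*(f*b*(Q-x1))" using h3 by simp
    also have "\<dots> = (f*f)*(b*b)*((Q-x1)*(Q-x1))" by (simp add: algebra_simps)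
    finally show ?thesis using hf hb by simp
  qed
  have quad: "2*x1*x1 - x1*(R+Q) + (R*R+Q*Q)/2 - 1 = 0"
  proof -
    have "4*(x1*x1) + 4*(x2*x2) + 4*(x3*x3) = 4" using hn by simp
    hence "4*(x1*x1) + 2*((R-x1)*(R-x1)) + 2*((Q-x1)*(Q-x1)) = 4" using q2 q3 by simp
    thus ?thesis by (simp add: field_simps)
  qed
  have iden: "2*N*N - N*D*(R+Q) + ((R*R+Q*Q)/2 - 1)*D*D
     = D*D*(2*x1*x1 - x1*(R+Q) + (R*R+Q*Q)/2 - 1) - (D*x1 - N)*(2*(D*x1+N) - D*(R+Q))"
    by (simp add: algebra_simps)
  show ?thesis using iden quad lin by simp
qed

lemma fin:
  fixes A B u U c d g b :: real
  assumes "A + B*u = 0" "u*u = U" "A*A - U*(B*B) = c + d*b + g*(b*b-2)" "b*b = 2" "c*c \<noteq> 2*(d*d)"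
  shows False
proof -
  have "A = -(B*u)" using assms(1) by simp
  hence "A*A = U*(B*B)" using assms(2) by (simp add: algebra_simps)
  hence "c + d*b = 0" using assms(3,4) by simp
  hence "c = -(d*b)" by simp
  hence "c*c = (d*d)*(b*b)" by (simp add: algebra_simps)
  thus False using assms(4,5) by simp
qed

lemma case_0:
  fixes b e f P Q R :: real
  assumes E: "2*(2*P - b*(e*R+f*Q))*(2*P - b*(e*R+f*Q)) - (2*P - b*(e*R+f*Q))*(2 - (e+f)*b)*(R+Q) + ((R*R+Q*Q)/2 - 1)*(2 - (e+f)*b)*(2 - (e+f)*b) = 0"
    and he: "e = 1" and hf: "f = 1" and hR: "R = (4/5)*P"
    and hPP: "P*P = 3/2" and hQQ: "Q*Q = 207/100" and hb: "b*b = 2"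
  shows False
proof -
  have iden: "2*(2*P - b*(e*R+f*Q))*(2*P - b*(e*R+f*Q)) - (2*P - b*(e*R+f*Q))*(2 - (e+f)*b)*(R+Q) + ((R*R+Q*Q)/2 - 1)*(2 - (e+f)*b)*(2 - (e+f)*b) = ((669/50) + (-143/50)*b) + ((-4) + (-4/5)*b)*(P*Q) + ((152/25) + (-112/25)*b + (32/25)*b*b)*(P*P-3/2) + ((2) + (-2)*b + (2)*b*b)*(Q*Q-207/100) + ((103/50))*(b*b-2)"
    unfolding he hf hR by (simp add: field_simps)
  have z1: "P*P-3/2 = 0" and z2: "Q*Q-207/100 = 0" and z3: "b*b-2 = 0" using hPP hQQ hb by simp_all
  have h1: "((669/50) + (-143/50)*b) + ((-4) + (-4/5)*b)*(P*Q) = 0" using iden E unfolding z1 z2 z3 by simp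
  have h2: "(P*Q)*(P*Q) = 621/200"
  proof -
    have "(P*Q)*(P*Q) = (P*P)*(Q*Q)" by (simp add: algebra_simps)
    thus ?thesis using hPP hQQ by simp
  qed
  have h3: "((669/50) + (-143/50)*b)*((669/50) + (-143/50)*b) - 621/200*(((-4) + (-4/5)*b)*((-4) + (-4/5)*b)) = (354323/2500) + (-120507/1250)*b + ((15481/2500))*(b*b-2)"
    by (simp add: field_simps)
  have h4: "((354323/2500)::real)*(354323/2500) \<noteq> 2*((-120507/1250)*(-120507/1250))" by simp
  show False by (rule fin[OF h1 h2 h3 hb h4])
qed

lemma case_1:
  fixes b e f P Q R :: real
  assumes E: "2*(2*P - b*(e*R+f*Q))*(2*P - b*(e*R+f*Q)) - (2*P - b*(e*R+f*Q))*(2 - (e+f)*b)*(R+Q) + ((R*R+Q*Q)/2 - 1)*(2 - (e+f)*b)*(2 - (e+f)*b) = 0"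
    and he: "e = 1" and hf: "f = 1" and hR: "R = (-4/5)*P"
    and hPP: "P*P = 3/2" and hQQ: "Q*Q = 207/100" and hb: "b*b = 2"
  shows False
proof -
  have iden: "2*(2*P - b*(e*R+f*Q))*(2*P - b*(e*R+f*Q)) - (2*P - b*(e*R+f*Q))*(2 - (e+f)*b)*(R+Q) + ((R*R+Q*Q)/2 - 1)*(2 - (e+f)*b)*(2 - (e+f)*b) = ((1149/50) + (337/50)*b) + ((-4) + (-36/5)*b)*(P*Q) + ((312/25) + (48/25)*b + (32/25)*b*b)*(P*P-3/2) + ((2) + (-2)*b + (2)*b*b)*(Q*Q-207/100) + ((103/50))*(b*b-2)"
    unfolding he hf hR by (simp add: field_simps)
  have z1: "P*P-3/2 = 0" and z2: "Q*Q-207/100 = 0" and z3: "b*b-2 = 0" using hPP hQQ hb by simp_all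
  have h1: "((1149/50) + (337/50)*b) + ((-4) + (-36/5)*b)*(P*Q) = 0" using iden E unfolding z1 z2 z3 by simp
  have h2: "(P*Q)*(P*Q) = 621/200"
  proof -
    have "(P*Q)*(P*Q) = (P*P)*(Q*Q)" by (simp add: algebra_simps)
    thus ?thesis using hPP hQQ by simp
  qed
  have h3: "((1149/50) + (337/50)*b)*((1149/50) + (337/50)*b) - 621/200*(((-4) + (-36/5)*b)*((-4) + (-36/5)*b)) = (618323/2500) + (163653/1250)*b + ((-288839/2500))*(b*b-2)"
    by (simp add: field_simps)
  have h4: "((618323/2500)::real)*(618323/2500) \<noteq> 2*((163653/1250)*(163653/1250))" by simp
  show False by (rule fin[OF h1 h2 h3 hb h4])
qed

lemma case_2:
  fixes b e f P Q R :: real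
  assumes E: "2*(2*P - b*(e*R+f*Q))*(2*P - b*(e*R+f*Q)) - (2*P - b*(e*R+f*Q))*(2 - (e+f)*b)*(R+Q) + ((R*R+Q*Q)/2 - 1)*(2 - (e+f)*b)*(2 - (e+f)*b) = 0"
    and he: "e = 1" and hf: "f = 1" and hR: "R = (2/3)*(1+e*b+6/5)*P"
    and hPP: "P*P = 3/2" and hQQ: "Q*Q = 207/100" and hb: "b*b = 2"
  shows False
proof -
  have iden: "2*(2*P - b*(e*R+f*Q))*(2*P - b*(e*R+f*Q)) - (2*P - b*(e*R+f*Q))*(2 - (e+f)*b)*(R+Q) + ((R*R+Q*Q)/2 - 1)*(2 - (e+f)*b)*(2 - (e+f)*b) = ((1687/150) + (-23/50)*b) + ((4/3) + (28/15)*b)*(P*Q) + ((1448/225) + (-2008/225)*b + (-104/75)*b*b + (136/45)*b*b*b + (8/9)*b*b*b*b)*(P*P-3/2) + ((2) + (-2)*b + (2)*b*b)*(Q*Q-207/100) + ((109/150) + (68/15)*b + (4/3)*b*b + (8/3)*P*Q)*(b*b-2)"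
    unfolding he hf hR by (simp add: field_simps)
  have z1: "P*P-3/2 = 0" and z2: "Q*Q-207/100 = 0" and z3: "b*b-2 = 0" using hPP hQQ hb by simp_all
  have h1: "((1687/150) + (-23/50)*b) + ((4/3) + (28/15)*b)*(P*Q) = 0" using iden E unfolding z1 z2 z3 by simp
  have h2: "(P*Q)*(P*Q) = 621/200"
  proof -
    have "(P*Q)*(P*Q) = (P*P)*(Q*Q)" by (simp add: algebra_simps)
    thus ?thesis using hPP hQQ by simp
  qed
  have h3: "((1687/150) + (-23/50)*b)*((1687/150) + (-23/50)*b) - 621/200*(((4/3) + (28/15)*b)*((4/3) + (28/15)*b)) = (2244427/22500) + (-96761/3750)*b + ((-26519/2500))*(b*b-2)"
    by (simp add: field_simps)
  have h4: "((2244427/22500)::real)*(2244427/22500) \<noteq> 2*((-96761/3750)*(-96761/3750))" by simp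
  show False by (rule fin[OF h1 h2 h3 hb h4])
qed

lemma case_3:
  fixes b e f P Q R :: real
  assumes E: "2*(2*P - b*(e*R+f*Q))*(2*P - b*(e*R+f*Q)) - (2*P - b*(e*R+f*Q))*(2 - (e+f)*b)*(R+Q) + ((R*R+Q*Q)/2 - 1)*(2 - (e+f)*b)*(2 - (e+f)*b) = 0"
    and he: "e = 1" and hf: "f = 1" and hR: "R = (2/3)*(1+e*b-6/5)*P"
    and hPP: "P*P = 3/2" and hQQ: "Q*Q = 207/100" and hb: "b*b = 2"
  shows False
proof -
  have iden: "2*(2*P - b*(e*R+f*Q))*(2*P - b*(e*R+f*Q)) - (2*P - b*(e*R+f*Q))*(2 - (e+f)*b)*(R+Q) + ((R*R+Q*Q)/2 - 1)*(2 - (e+f)*b)*(2 - (e+f)*b) = ((2167/150) + (-183/50)*b) + ((4/3) + (-68/15)*b)*(P*Q) + ((1928/225) + (-568/225)*b + (-104/75)*b*b + (-56/45)*b*b*b + (8/9)*b*b*b*b)*(P*P-3/2) + ((2) + (-2)*b + (2)*b*b)*(Q*Q-207/100) + ((109/150) + (-28/15)*b + (4/3)*b*b + (8/3)*P*Q)*(b*b-2)"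
    unfolding he hf hR by (simp add: field_simps)
  have z1: "P*P-3/2 = 0" and z2: "Q*Q-207/100 = 0" and z3: "b*b-2 = 0" using hPP hQQ hb by simp_all
  have h1: "((2167/150) + (-183/50)*b) + ((4/3) + (-68/15)*b)*(P*Q) = 0" using iden E unfolding z1 z2 z3 by simp
  have h2: "(P*Q)*(P*Q) = 621/200"
  proof -
    have "(P*Q)*(P*Q) = (P*P)*(Q*Q)" by (simp add: algebra_simps)
    thus ?thesis using hPP hQQ by simp
  qed
  have h3: "((2167/150) + (-183/50)*b)*((2167/150) + (-183/50)*b) - 621/200*(((4/3) + (-68/15)*b)*((4/3) + (-68/15)*b)) = (2302987/22500) + (-85267/1250)*b + ((-126039/2500))*(b*b-2)"
    by (simp add: field_simps)
  have h4: "((2302987/22500)::real)*(2302987/22500) \<noteq> 2*((-85267/1250)*(-85267/1250))" by simp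
  show False by (rule fin[OF h1 h2 h3 hb h4])
qed

lemma case_4:
  fixes b e f P Q R :: real
  assumes E: "2*(2*P - b*(e*R+f*Q))*(2*P - b*(e*R+f*Q)) - (2*P - b*(e*R+f*Q))*(2 - (e+f)*b)*(R+Q) + ((R*R+Q*Q)/2 - 1)*(2 - (e+f)*b)*(2 - (e+f)*b) = 0"
    and he: "e = 1" and hf: "f = -1" and hR: "R = (4/5)*P"
    and hPP: "P*P = 3/2" and hQQ: "Q*Q = 207/100" and hb: "b*b = 2"
  shows False
proof -
  have iden: "2*(2*P - b*(e*R+f*Q))*(2*P - b*(e*R+f*Q)) - (2*P - b*(e*R+f*Q))*(2 - (e+f)*b)*(R+Q) + ((R*R+Q*Q)/2 - 1)*(2 - (e+f)*b)*(2 - (e+f)*b) = ((1069/50) + (-591/50)*b) + ((-52/5) + (8)*b)*(P*Q) + ((152/25) + (-128/25)*b + (32/25)*b*b)*(P*P-3/2) + ((2) + (-2)*b + (2)*b*b)*(Q*Q-207/100) + ((303/50) + (-16/5)*P*Q)*(b*b-2)"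
    unfolding he hf hR by (simp add: field_simps)
  have z1: "P*P-3/2 = 0" and z2: "Q*Q-207/100 = 0" and z3: "b*b-2 = 0" using hPP hQQ hb by simp_all
  have h1: "((1069/50) + (-591/50)*b) + ((-52/5) + (8)*b)*(P*Q) = 0" using iden E unfolding z1 z2 z3 by simp
  have h2: "(P*Q)*(P*Q) = 621/200"
  proof -
    have "(P*Q)*(P*Q) = (P*P)*(Q*Q)" by (simp add: algebra_simps)
    thus ?thesis using hPP hQQ by simp
  qed
  have h3: "((1069/50) + (-591/50)*b)*((1069/50) + (-591/50)*b) - 621/200*(((-52/5) + (8)*b)*((-52/5) + (8)*b)) = (8131/2500) + (14061/1250)*b + ((-147519/2500))*(b*b-2)"
    by (simp add: field_simps)
  have h4: "((8131/2500)::real)*(8131/2500) \<noteq> 2*((14061/1250)*(14061/1250))" by simp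
  show False by (rule fin[OF h1 h2 h3 hb h4])
qed

lemma case_5:
  fixes b e f P Q R :: real
  assumes E: "2*(2*P - b*(e*R+f*Q))*(2*P - b*(e*R+f*Q)) - (2*P - b*(e*R+f*Q))*(2 - (e+f)*b)*(R+Q) + ((R*R+Q*Q)/2 - 1)*(2 - (e+f)*b)*(2 - (e+f)*b) = 0"
    and he: "e = 1" and hf: "f = -1" and hR: "R = (-4/5)*P"
    and hPP: "P*P = 3/2" and hQQ: "Q*Q = 207/100" and hb: "b*b = 2"
  shows False
proof -
  have iden: "2*(2*P - b*(e*R+f*Q))*(2*P - b*(e*R+f*Q)) - (2*P - b*(e*R+f*Q))*(2 - (e+f)*b)*(R+Q) + ((R*R+Q*Q)/2 - 1)*(2 - (e+f)*b)*(2 - (e+f)*b) = ((1549/50) + (369/50)*b) + ((12/5) + (8)*b)*(P*Q) + ((312/25) + (192/25)*b + (32/25)*b*b)*(P*P-3/2) + ((2) + (-2)*b + (2)*b*b)*(Q*Q-207/100) + ((303/50) + (16/5)*P*Q)*(b*b-2)"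
    unfolding he hf hR by (simp add: field_simps)
  have z1: "P*P-3/2 = 0" and z2: "Q*Q-207/100 = 0" and z3: "b*b-2 = 0" using hPP hQQ hb by simp_all
  have h1: "((1549/50) + (369/50)*b) + ((12/5) + (8)*b)*(P*Q) = 0" using iden E unfolding z1 z2 z3 by simp
  have h2: "(P*Q)*(P*Q) = 621/200"
  proof -
    have "(P*Q)*(P*Q) = (P*P)*(Q*Q)" by (simp add: algebra_simps)
    thus ?thesis using hPP hQQ by simp
  qed
  have h3: "((1549/50) + (369/50)*b)*((1549/50) + (369/50)*b) - 621/200*(((12/5) + (8)*b)*((12/5) + (8)*b)) = (1633411/2500) + (422541/1250)*b + ((-360639/2500))*(b*b-2)"
    by (simp add: field_simps)
  have h4: "((1633411/2500)::real)*(1633411/2500) \<noteq> 2*((422541/1250)*(422541/1250))" by simp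
  show False by (rule fin[OF h1 h2 h3 hb h4])
qed

lemma case_6:
  fixes b e f P Q R :: real
  assumes E: "2*(2*P - b*(e*R+f*Q))*(2*P - b*(e*R+f*Q)) - (2*P - b*(e*R+f*Q))*(2 - (e+f)*b)*(R+Q) + ((R*R+Q*Q)/2 - 1)*(2 - (e+f)*b)*(2 - (e+f)*b) = 0"
    and he: "e = 1" and hf: "f = -1" and hR: "R = (2/3)*(1+e*b+6/5)*P"
    and hPP: "P*P = 3/2" and hQQ: "Q*Q = 207/100" and hb: "b*b = 2"
  shows False
proof -
  have iden: "2*(2*P - b*(e*R+f*Q))*(2*P - b*(e*R+f*Q)) - (2*P - b*(e*R+f*Q))*(2 - (e+f)*b)*(R+Q) + ((R*R+Q*Q)/2 - 1)*(2 - (e+f)*b)*(2 - (e+f)*b) = ((5207/150) + (49/50)*b) + ((-236/15) + (8/3)*b)*(P*Q) + ((1448/225) + (-464/75)*b + (848/225)*b*b + (24/5)*b*b*b + (8/9)*b*b*b*b)*(P*P-3/2) + ((2) + (-2)*b + (2)*b*b)*(Q*Q-207/100) + ((623/50) + (36/5)*b + (4/3)*b*b + (-88/15)*P*Q + (-8/3)*P*Q*b)*(b*b-2)"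
    unfolding he hf hR by (simp add: field_simps)
  have z1: "P*P-3/2 = 0" and z2: "Q*Q-207/100 = 0" and z3: "b*b-2 = 0" using hPP hQQ hb by simp_all
  have h1: "((5207/150) + (49/50)*b) + ((-236/15) + (8/3)*b)*(P*Q) = 0" using iden E unfolding z1 z2 z3 by simp
  have h2: "(P*Q)*(P*Q) = 621/200"
  proof -
    have "(P*Q)*(P*Q) = (P*P)*(Q*Q)" by (simp add: algebra_simps)
    thus ?thesis using hPP hQQ by simp
  qed
  have h3: "((5207/150) + (49/50)*b)*((5207/150) + (49/50)*b) - 621/200*(((-236/15) + (8/3)*b)*((-236/15) + (8/3)*b)) = (8868859/22500) + (1232183/3750)*b + ((-52799/2500))*(b*b-2)"
    by (simp add: field_simps)
  have h4: "((8868859/22500)::real)*(8868859/22500) \<noteq> 2*((1232183/3750)*(1232183/3750))" by simp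
  show False by (rule fin[OF h1 h2 h3 hb h4])
qed

lemma case_7:
  fixes b e f P Q R :: real
  assumes E: "2*(2*P - b*(e*R+f*Q))*(2*P - b*(e*R+f*Q)) - (2*P - b*(e*R+f*Q))*(2 - (e+f)*b)*(R+Q) + ((R*R+Q*Q)/2 - 1)*(2 - (e+f)*b)*(2 - (e+f)*b) = 0"
    and he: "e = 1" and hf: "f = -1" and hR: "R = (2/3)*(1+e*b-6/5)*P"
    and hPP: "P*P = 3/2" and hQQ: "Q*Q = 207/100" and hb: "b*b = 2"
  shows False
proof -
  have iden: "2*(2*P - b*(e*R+f*Q))*(2*P - b*(e*R+f*Q)) - (2*P - b*(e*R+f*Q))*(2 - (e+f)*b)*(R+Q) + ((R*R+Q*Q)/2 - 1)*(2 - (e+f)*b)*(2 - (e+f)*b) = ((1847/150) + (-271/50)*b) + ((-44/15) + (8/3)*b)*(P*Q) + ((1928/225) + (-48/25)*b + (-1072/225)*b*b + (8/15)*b*b*b + (8/9)*b*b*b*b)*(P*P-3/2) + ((2) + (-2)*b + (2)*b*b)*(Q*Q-207/100) + ((-17/50) + (4/5)*b + (4/3)*b*b + (8/15)*P*Q + (-8/3)*P*Q*b)*(b*b-2)"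
    unfolding he hf hR by (simp add: field_simps)
  have z1: "P*P-3/2 = 0" and z2: "Q*Q-207/100 = 0" and z3: "b*b-2 = 0" using hPP hQQ hb by simp_all
  have h1: "((1847/150) + (-271/50)*b) + ((-44/15) + (8/3)*b)*(P*Q) = 0" using iden E unfolding z1 z2 z3 by simp
  have h2: "(P*Q)*(P*Q) = 621/200"
  proof -
    have "(P*Q)*(P*Q) = (P*P)*(Q*Q)" by (simp add: algebra_simps)
    thus ?thesis using hPP hQQ by simp
  qed
  have h3: "((1847/150) + (-271/50)*b)*((1847/150) + (-271/50)*b) - 621/200*(((-44/15) + (8/3)*b)*((-44/15) + (8/3)*b)) = (3138619/22500) + (-318377/3750)*b + ((18241/2500))*(b*b-2)"
    by (simp add: field_simps)
  have h4: "((3138619/22500)::real)*(3138619/22500) \<noteq> 2*((-318377/3750)*(-318377/3750))" by simp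
  show False by (rule fin[OF h1 h2 h3 hb h4])
qed

lemma case_8:
  fixes b e f P Q R :: real
  assumes E: "2*(2*P - b*(e*R+f*Q))*(2*P - b*(e*R+f*Q)) - (2*P - b*(e*R+f*Q))*(2 - (e+f)*b)*(R+Q) + ((R*R+Q*Q)/2 - 1)*(2 - (e+f)*b)*(2 - (e+f)*b) = 0"
    and he: "e = -1" and hf: "f = 1" and hR: "R = (4/5)*P"
    and hPP: "P*P = 3/2" and hQQ: "Q*Q = 207/100" and hb: "b*b = 2"
  shows False
proof -
  have iden: "2*(2*P - b*(e*R+f*Q))*(2*P - b*(e*R+f*Q)) - (2*P - b*(e*R+f*Q))*(2 - (e+f)*b)*(R+Q) + ((R*R+Q*Q)/2 - 1)*(2 - (e+f)*b)*(2 - (e+f)*b) = ((1069/50) + (591/50)*b) + ((-52/5) + (-8)*b)*(P*Q) + ((152/25) + (128/25)*b + (32/25)*b*b)*(P*P-3/2) + ((2) + (2)*b + (2)*b*b)*(Q*Q-207/100) + ((303/50) + (-16/5)*P*Q)*(b*b-2)"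
    unfolding he hf hR by (simp add: field_simps)
  have z1: "P*P-3/2 = 0" and z2: "Q*Q-207/100 = 0" and z3: "b*b-2 = 0" using hPP hQQ hb by simp_all
  have h1: "((1069/50) + (591/50)*b) + ((-52/5) + (-8)*b)*(P*Q) = 0" using iden E unfolding z1 z2 z3 by simp
  have h2: "(P*Q)*(P*Q) = 621/200"
  proof -
    have "(P*Q)*(P*Q) = (P*P)*(Q*Q)" by (simp add: algebra_simps)
    thus ?thesis using hPP hQQ by simp
  qed
  have h3: "((1069/50) + (591/50)*b)*((1069/50) + (591/50)*b) - 621/200*(((-52/5) + (-8)*b)*((-52/5) + (-8)*b)) = (8131/2500) + (-14061/1250)*b + ((-147519/2500))*(b*b-2)"
    by (simp add: field_simps)
  have h4: "((8131/2500)::real)*(8131/2500) \<noteq> 2*((-14061/1250)*(-14061/1250))" by simp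
  show False by (rule fin[OF h1 h2 h3 hb h4])
qed

lemma case_9:
  fixes b e f P Q R :: real
  assumes E: "2*(2*P - b*(e*R+f*Q))*(2*P - b*(e*R+f*Q)) - (2*P - b*(e*R+f*Q))*(2 - (e+f)*b)*(R+Q) + ((R*R+Q*Q)/2 - 1)*(2 - (e+f)*b)*(2 - (e+f)*b) = 0"
    and he: "e = -1" and hf: "f = 1" and hR: "R = (-4/5)*P"
    and hPP: "P*P = 3/2" and hQQ: "Q*Q = 207/100" and hb: "b*b = 2"
  shows False
proof -
  have iden: "2*(2*P - b*(e*R+f*Q))*(2*P - b*(e*R+f*Q)) - (2*P - b*(e*R+f*Q))*(2 - (e+f)*b)*(R+Q) + ((R*R+Q*Q)/2 - 1)*(2 - (e+f)*b)*(2 - (e+f)*b) = ((1549/50) + (-369/50)*b) + ((12/5) + (-8)*b)*(P*Q) + ((312/25) + (-192/25)*b + (32/25)*b*b)*(P*P-3/2) + ((2) + (2)*b + (2)*b*b)*(Q*Q-207/100) + ((303/50) + (16/5)*P*Q)*(b*b-2)"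
    unfolding he hf hR by (simp add: field_simps)
  have z1: "P*P-3/2 = 0" and z2: "Q*Q-207/100 = 0" and z3: "b*b-2 = 0" using hPP hQQ hb by simp_all
  have h1: "((1549/50) + (-369/50)*b) + ((12/5) + (-8)*b)*(P*Q) = 0" using iden E unfolding z1 z2 z3 by simp
  have h2: "(P*Q)*(P*Q) = 621/200"
  proof -
    have "(P*Q)*(P*Q) = (P*P)*(Q*Q)" by (simp add: algebra_simps)
    thus ?thesis using hPP hQQ by simp
  qed
  have h3: "((1549/50) + (-369/50)*b)*((1549/50) + (-369/50)*b) - 621/200*(((12/5) + (-8)*b)*((12/5) + (-8)*b)) = (1633411/2500) + (-422541/1250)*b + ((-360639/2500))*(b*b-2)"
    by (simp add: field_simps)
  have h4: "((1633411/2500)::real)*(1633411/2500) \<noteq> 2*((-422541/1250)*(-422541/1250))" by simp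
  show False by (rule fin[OF h1 h2 h3 hb h4])
qed

lemma case_10:
  fixes b e f P Q R :: real
  assumes E: "2*(2*P - b*(e*R+f*Q))*(2*P - b*(e*R+f*Q)) - (2*P - b*(e*R+f*Q))*(2 - (e+f)*b)*(R+Q) + ((R*R+Q*Q)/2 - 1)*(2 - (e+f)*b)*(2 - (e+f)*b) = 0"
    and he: "e = -1" and hf: "f = 1" and hR: "R = (2/3)*(1+e*b+6/5)*P"
    and hPP: "P*P = 3/2" and hQQ: "Q*Q = 207/100" and hb: "b*b = 2"
  shows False
proof -
  have iden: "2*(2*P - b*(e*R+f*Q))*(2*P - b*(e*R+f*Q)) - (2*P - b*(e*R+f*Q))*(2 - (e+f)*b)*(R+Q) + ((R*R+Q*Q)/2 - 1)*(2 - (e+f)*b)*(2 - (e+f)*b) = ((5207/150) + (-49/50)*b) + ((-236/15) + (-8/3)*b)*(P*Q) + ((1448/225) + (464/75)*b + (848/225)*b*b + (-24/5)*b*b*b + (8/9)*b*b*b*b)*(P*P-3/2) + ((2) + (2)*b + (2)*b*b)*(Q*Q-207/100) + ((623/50) + (-36/5)*b + (4/3)*b*b + (-88/15)*P*Q + (8/3)*P*Q*b)*(b*b-2)"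
    unfolding he hf hR by (simp add: field_simps)
  have z1: "P*P-3/2 = 0" and z2: "Q*Q-207/100 = 0" and z3: "b*b-2 = 0" using hPP hQQ hb by simp_all
  have h1: "((5207/150) + (-49/50)*b) + ((-236/15) + (-8/3)*b)*(P*Q) = 0" using iden E unfolding z1 z2 z3 by simp
  have h2: "(P*Q)*(P*Q) = 621/200"
  proof -
    have "(P*Q)*(P*Q) = (P*P)*(Q*Q)" by (simp add: algebra_simps)
    thus ?thesis using hPP hQQ by simp
  qed
  have h3: "((5207/150) + (-49/50)*b)*((5207/150) + (-49/50)*b) - 621/200*(((-236/15) + (-8/3)*b)*((-236/15) + (-8/3)*b)) = (8868859/22500) + (-1232183/3750)*b + ((-52799/2500))*(b*b-2)"
    by (simp add: field_simps)
  have h4: "((8868859/22500)::real)*(8868859/22500) \<noteq> 2*((-1232183/3750)*(-1232183/3750))" by simp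
  show False by (rule fin[OF h1 h2 h3 hb h4])
qed

lemma case_11:
  fixes b e f P Q R :: real
  assumes E: "2*(2*P - b*(e*R+f*Q))*(2*P - b*(e*R+f*Q)) - (2*P - b*(e*R+f*Q))*(2 - (e+f)*b)*(R+Q) + ((R*R+Q*Q)/2 - 1)*(2 - (e+f)*b)*(2 - (e+f)*b) = 0"
    and he: "e = -1" and hf: "f = 1" and hR: "R = (2/3)*(1+e*b-6/5)*P"
    and hPP: "P*P = 3/2" and hQQ: "Q*Q = 207/100" and hb: "b*b = 2"
  shows False
proof -
  have iden: "2*(2*P - b*(e*R+f*Q))*(2*P - b*(e*R+f*Q)) - (2*P - b*(e*R+f*Q))*(2 - (e+f)*b)*(R+Q) + ((R*R+Q*Q)/2 - 1)*(2 - (e+f)*b)*(2 - (e+f)*b) = ((1847/150) + (271/50)*b) + ((-44/15) + (-8/3)*b)*(P*Q) + ((1928/225) + (48/25)*b + (-1072/225)*b*b + (-8/15)*b*b*b + (8/9)*b*b*b*b)*(P*P-3/2) + ((2) + (2)*b + (2)*b*b)*(Q*Q-207/100) + ((-17/50) + (-4/5)*b + (4/3)*b*b + (8/15)*P*Q + (8/3)*P*Q*b)*(b*b-2)"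
    unfolding he hf hR by (simp add: field_simps)
  have z1: "P*P-3/2 = 0" and z2: "Q*Q-207/100 = 0" and z3: "b*b-2 = 0" using hPP hQQ hb by simp_all
  have h1: "((1847/150) + (271/50)*b) + ((-44/15) + (-8/3)*b)*(P*Q) = 0" using iden E unfolding z1 z2 z3 by simp
  have h2: "(P*Q)*(P*Q) = 621/200"
  proof -
    have "(P*Q)*(P*Q) = (P*P)*(Q*Q)" by (simp add: algebra_simps)
    thus ?thesis using hPP hQQ by simp
  qed
  have h3: "((1847/150) + (271/50)*b)*((1847/150) + (271/50)*b) - 621/200*(((-44/15) + (-8/3)*b)*((-44/15) + (-8/3)*b)) = (3138619/22500) + (318377/3750)*b + ((18241/2500))*(b*b-2)"
    by (simp add: field_simps)
  have h4: "((3138619/22500)::real)*(3138619/22500) \<noteq> 2*((318377/3750)*(318377/3750))" by simp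
  show False by (rule fin[OF h1 h2 h3 hb h4])
qed

lemma case_12:
  fixes b e f P Q R :: real
  assumes E: "2*(2*P - b*(e*R+f*Q))*(2*P - b*(e*R+f*Q)) - (2*P - b*(e*R+f*Q))*(2 - (e+f)*b)*(R+Q) + ((R*R+Q*Q)/2 - 1)*(2 - (e+f)*b)*(2 - (e+f)*b) = 0"
    and he: "e = -1" and hf: "f = -1" and hR: "R = (4/5)*P"
    and hPP: "P*P = 3/2" and hQQ: "Q*Q = 207/100" and hb: "b*b = 2"
  shows False
proof -
  have iden: "2*(2*P - b*(e*R+f*Q))*(2*P - b*(e*R+f*Q)) - (2*P - b*(e*R+f*Q))*(2 - (e+f)*b)*(R+Q) + ((R*R+Q*Q)/2 - 1)*(2 - (e+f)*b)*(2 - (e+f)*b) = ((669/50) + (143/50)*b) + ((-4) + (4/5)*b)*(P*Q) + ((152/25) + (112/25)*b + (32/25)*b*b)*(P*P-3/2) + ((2) + (2)*b + (2)*b*b)*(Q*Q-207/100) + ((103/50))*(b*b-2)"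
    unfolding he hf hR by (simp add: field_simps)
  have z1: "P*P-3/2 = 0" and z2: "Q*Q-207/100 = 0" and z3: "b*b-2 = 0" using hPP hQQ hb by simp_all
  have h1: "((669/50) + (143/50)*b) + ((-4) + (4/5)*b)*(P*Q) = 0" using iden E unfolding z1 z2 z3 by simp
  have h2: "(P*Q)*(P*Q) = 621/200"
  proof -
    have "(P*Q)*(P*Q) = (P*P)*(Q*Q)" by (simp add: algebra_simps)
    thus ?thesis using hPP hQQ by simp
  qed
  have h3: "((669/50) + (143/50)*b)*((669/50) + (143/50)*b) - 621/200*(((-4) + (4/5)*b)*((-4) + (4/5)*b)) = (354323/2500) + (120507/1250)*b + ((15481/2500))*(b*b-2)"
    by (simp add: field_simps)
  have h4: "((354323/2500)::real)*(354323/2500) \<noteq> 2*((120507/1250)*(120507/1250))" by simp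
  show False by (rule fin[OF h1 h2 h3 hb h4])
qed

lemma case_13:
  fixes b e f P Q R :: real
  assumes E: "2*(2*P - b*(e*R+f*Q))*(2*P - b*(e*R+f*Q)) - (2*P - b*(e*R+f*Q))*(2 - (e+f)*b)*(R+Q) + ((R*R+Q*Q)/2 - 1)*(2 - (e+f)*b)*(2 - (e+f)*b) = 0"
    and he: "e = -1" and hf: "f = -1" and hR: "R = (-4/5)*P"
    and hPP: "P*P = 3/2" and hQQ: "Q*Q = 207/100" and hb: "b*b = 2"
  shows False
proof -
  have iden: "2*(2*P - b*(e*R+f*Q))*(2*P - b*(e*R+f*Q)) - (2*P - b*(e*R+f*Q))*(2 - (e+f)*b)*(R+Q) + ((R*R+Q*Q)/2 - 1)*(2 - (e+f)*b)*(2 - (e+f)*b) = ((1149/50) + (-337/50)*b) + ((-4) + (36/5)*b)*(P*Q) + ((312/25) + (-48/25)*b + (32/25)*b*b)*(P*P-3/2) + ((2) + (2)*b + (2)*b*b)*(Q*Q-207/100) + ((103/50))*(b*b-2)"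
    unfolding he hf hR by (simp add: field_simps)
  have z1: "P*P-3/2 = 0" and z2: "Q*Q-207/100 = 0" and z3: "b*b-2 = 0" using hPP hQQ hb by simp_all
  have h1: "((1149/50) + (-337/50)*b) + ((-4) + (36/5)*b)*(P*Q) = 0" using iden E unfolding z1 z2 z3 by simp
  have h2: "(P*Q)*(P*Q) = 621/200"
  proof -
    have "(P*Q)*(P*Q) = (P*P)*(Q*Q)" by (simp add: algebra_simps)
    thus ?thesis using hPP hQQ by simp
  qed
  have h3: "((1149/50) + (-337/50)*b)*((1149/50) + (-337/50)*b) - 621/200*(((-4) + (36/5)*b)*((-4) + (36/5)*b)) = (618323/2500) + (-163653/1250)*b + ((-288839/2500))*(b*b-2)"
    by (simp add: field_simps)
  have h4: "((618323/2500)::real)*(618323/2500) \<noteq> 2*((-163653/1250)*(-163653/1250))" by simp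
  show False by (rule fin[OF h1 h2 h3 hb h4])
qed

lemma case_14:
  fixes b e f P Q R :: real
  assumes E: "2*(2*P - b*(e*R+f*Q))*(2*P - b*(e*R+f*Q)) - (2*P - b*(e*R+f*Q))*(2 - (e+f)*b)*(R+Q) + ((R*R+Q*Q)/2 - 1)*(2 - (e+f)*b)*(2 - (e+f)*b) = 0"
    and he: "e = -1" and hf: "f = -1" and hR: "R = (2/3)*(1+e*b+6/5)*P"
    and hPP: "P*P = 3/2" and hQQ: "Q*Q = 207/100" and hb: "b*b = 2"
  shows False
proof -
  have iden: "2*(2*P - b*(e*R+f*Q))*(2*P - b*(e*R+f*Q)) - (2*P - b*(e*R+f*Q))*(2 - (e+f)*b)*(R+Q) + ((R*R+Q*Q)/2 - 1)*(2 - (e+f)*b)*(2 - (e+f)*b) = ((1687/150) + (23/50)*b) + ((4/3) + (-28/15)*b)*(P*Q) + ((1448/225) + (2008/225)*b + (-104/75)*b*b + (-136/45)*b*b*b + (8/9)*b*b*b*b)*(P*P-3/2) + ((2) + (2)*b + (2)*b*b)*(Q*Q-207/100) + ((109/150) + (-68/15)*b + (4/3)*b*b + (8/3)*P*Q)*(b*b-2)"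
    unfolding he hf hR by (simp add: field_simps)
  have z1: "P*P-3/2 = 0" and z2: "Q*Q-207/100 = 0" and z3: "b*b-2 = 0" using hPP hQQ hb by simp_all
  have h1: "((1687/150) + (23/50)*b) + ((4/3) + (-28/15)*b)*(P*Q) = 0" using iden E unfolding z1 z2 z3 by simp
  have h2: "(P*Q)*(P*Q) = 621/200"
  proof -
    have "(P*Q)*(P*Q) = (P*P)*(Q*Q)" by (simp add: algebra_simps)
    thus ?thesis using hPP hQQ by simp
  qed
  have h3: "((1687/150) + (23/50)*b)*((1687/150) + (23/50)*b) - 621/200*(((4/3) + (-28/15)*b)*((4/3) + (-28/15)*b)) = (2244427/22500) + (96761/3750)*b + ((-26519/2500))*(b*b-2)"
    by (simp add: field_simps)
  have h4: "((2244427/22500)::real)*(2244427/22500) \<noteq> 2*((96761/3750)*(96761/3750))" by simp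
  show False by (rule fin[OF h1 h2 h3 hb h4])
qed

lemma case_15:
  fixes b e f P Q R :: real
  assumes E: "2*(2*P - b*(e*R+f*Q))*(2*P - b*(e*R+f*Q)) - (2*P - b*(e*R+f*Q))*(2 - (e+f)*b)*(R+Q) + ((R*R+Q*Q)/2 - 1)*(2 - (e+f)*b)*(2 - (e+f)*b) = 0"
    and he: "e = -1" and hf: "f = -1" and hR: "R = (2/3)*(1+e*b-6/5)*P"
    and hPP: "P*P = 3/2" and hQQ: "Q*Q = 207/100" and hb: "b*b = 2"
  shows False
proof -
  have iden: "2*(2*P - b*(e*R+f*Q))*(2*P - b*(e*R+f*Q)) - (2*P - b*(e*R+f*Q))*(2 - (e+f)*b)*(R+Q) + ((R*R+Q*Q)/2 - 1)*(2 - (e+f)*b)*(2 - (e+f)*b) = ((2167/150) + (183/50)*b) + ((4/3) + (68/15)*b)*(P*Q) + ((1928/225) + (568/225)*b + (-104/75)*b*b + (56/45)*b*b*b + (8/9)*b*b*b*b)*(P*P-3/2) + ((2) + (2)*b + (2)*b*b)*(Q*Q-207/100) + ((109/150) + (28/15)*b + (4/3)*b*b + (8/3)*P*Q)*(b*b-2)"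
    unfolding he hf hR by (simp add: field_simps)
  have z1: "P*P-3/2 = 0" and z2: "Q*Q-207/100 = 0" and z3: "b*b-2 = 0" using hPP hQQ hb by simp_all
  have h1: "((2167/150) + (183/50)*b) + ((4/3) + (68/15)*b)*(P*Q) = 0" using iden E unfolding z1 z2 z3 by simp
  have h2: "(P*Q)*(P*Q) = 621/200"
  proof -
    have "(P*Q)*(P*Q) = (P*P)*(Q*Q)" by (simp add: algebra_simps)
    thus ?thesis using hPP hQQ by simp
  qed
  have h3: "((2167/150) + (183/50)*b)*((2167/150) + (183/50)*b) - 621/200*(((4/3) + (68/15)*b)*((4/3) + (68/15)*b)) = (2302987/22500) + (85267/1250)*b + ((-126039/2500))*(b*b-2)"
    by (simp add: field_simps)
  have h4: "((2302987/22500)::real)*(2302987/22500) \<noteq> 2*((85267/1250)*(85267/1250))" by simp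
  show False by (rule fin[OF h1 h2 h3 hb h4])
qed

lemma core:
  fixes x1 x2 x3 b e f P Q R :: real
  assumes hb: "b*b = 2" and he: "e = 1 \<or> e = -1" and hf: "f = 1 \<or> f = -1"
    and hn: "x1*x1+x2*x2+x3*x3 = 1" and hP: "P = x1+x2+x3"
    and hQ: "Q = x1+f*b*x3" and hR: "R = x1+e*b*x2"
    and hPP: "P*P = 3/2" and hQQ: "Q*Q = 207/100"
    and hk: "R = (4/5)*P \<or> R = (-4/5)*P \<or> R = (2/3)*(1+e*b+6/5)*P \<or> R = (2/3)*(1+e*b-6/5)*P"
  shows False
proof -
  have ee: "e*e = 1" using he by auto
  have ff: "f*f = 1" using hf by auto
  have E: "2*(2*P - b*(e*R+f*Q))*(2*P - b*(e*R+f*Q)) - (2*P - b*(e*R+f*Q))*(2 - (e+f)*b)*(R+Q) + ((R*R+Q*Q)/2 - 1)*(2 - (e+f)*b)*(2 - (e+f)*b) = 0"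
    by (rule stepE[OF hb ee ff hn hP hQ hR refl refl])
  show False
  proof (cases "e = 1")
    case e1: True
    show False
    proof (cases "f = 1")
      case f1: True
      from hk show False
        by (elim disjE) (erule case_0[OF E e1 f1 _ hPP hQQ hb] case_1[OF E e1 f1 _ hPP hQQ hb] case_2[OF E e1 f1 _ hPP hQQ hb] case_3[OF E e1 f1 _ hPP hQQ hb])+
    next
      case False
      hence f1: "f = -1" using hf by simp
      from hk show False
        by (elim disjE) (erule case_4[OF E e1 f1 _ hPP hQQ hb] case_5[OF E e1 f1 _ hPP hQQ hb] case_6[OF E e1 f1 _ hPP hQQ hb] case_7[OF E e1 f1 _ hPP hQQ hb])+
    qed
  next
    case False
    hence e1: "e = -1" using he by simp
    show False
    proof (cases "f = 1")
      case f1: True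
      from hk show False
        by (elim disjE) (erule case_8[OF E e1 f1 _ hPP hQQ hb] case_9[OF E e1 f1 _ hPP hQQ hb] case_10[OF E e1 f1 _ hPP hQQ hb] case_11[OF E e1 f1 _ hPP hQQ hb])+
    next
      case False
      hence f1: "f = -1" using hf by simp
      from hk show False
        by (elim disjE) (erule case_12[OF E e1 f1 _ hPP hQQ hb] case_13[OF E e1 f1 _ hPP hQQ hb] case_14[OF E e1 f1 _ hPP hQQ hb] case_15[OF E e1 f1 _ hPP hQQ hb])+
    qed
  qed
qed

lemma sq_cases:
  fixes t c :: real
  assumes "t*t = c*c"
  shows "t = c \<or> t = -c"
proof -
  have "(t - c)*(t + c) = 0" using assms by (simp add: algebra_simps)
  thus ?thesis by (simp add: eq_neg_iff_add_eq_0)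
qed

lemma kA:
  fixes R P :: real
  assumes "R*R = 96/100" "P*P = 3/2"
  shows "R = (4/5)*P \<or> R = (-4/5)*P"
proof -
  have "(P*R)*(P*R) = (P*P)*(R*R)" by (simp add: algebra_simps)
  hence "(P*R)*(P*R) = (6/5)*(6/5)" using assms by simp
  hence c: "P*R = 6/5 \<or> P*R = -(6/5)" by (rule sq_cases)
  have "R*(P*P) = (P*R)*P" by (simp add: algebra_simps)
  hence r: "R*(3/2) = (P*R)*P" using assms by simp
  from c show ?thesis
  proof
    assume "P*R = 6/5"
    hence "R*(3/2) = (6/5)*P" using r by (simp only:)
    hence "R = (4/5)*P" by linarith
    thus ?thesis ..
  next
    assume "P*R = -(6/5)"
    hence "R*(3/2) = (-(6/5))*P" using r by (simp only:)
    hence "R = (-4/5)*P" by linarith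
    thus ?thesis ..
  qed
qed

lemma kB:
  fixes R P q Ry e b :: real
  assumes "P*P = 3/2" "Ry*Ry = 96/100" "q*q = 3/2" "q*Ry = 1 + e*b - P*R"
  shows "R = (2/3)*(1+e*b+6/5)*P \<or> R = (2/3)*(1+e*b-6/5)*P"
proof -
  have "(q*Ry)*(q*Ry) = (q*q)*(Ry*Ry)" by (simp add: algebra_simps)
  hence "(q*Ry)*(q*Ry) = (6/5)*(6/5)" using assms by simp
  hence c: "q*Ry = 6/5 \<or> q*Ry = -(6/5)" by (rule sq_cases)
  have "R*(P*P) = (P*R)*P" by (simp add: algebra_simps)
  hence r: "R*(3/2) = (P*R)*P" using assms by simp
  from c show ?thesis
  proof
    assume "q*Ry = 6/5"
    hence "P*R = 1 + e*b - 6/5" using assms(4) by simp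
    hence "R*(3/2) = (1 + e*b - 6/5)*P" using r by (simp only:)
    hence "R = (2/3)*(1+e*b-6/5)*P" by (simp add: algebra_simps)
    thus ?thesis ..
  next
    assume "q*Ry = -(6/5)"
    hence "P*R = 1 + e*b + 6/5" using assms(4) by simp
    hence "R*(3/2) = (1 + e*b + 6/5)*P" using r by (simp only:)
    hence "R = (2/3)*(1+e*b+6/5)*P" by (simp add: algebra_simps)
    thus ?thesis ..
  qed
qed

lemma wlem:
  fixes x1 x2 x3 y1 y2 y3 p q :: real
  assumes nx: "x1*x1+x2*x2+x3*x3 = 1" and ny: "y1*y1+y2*y2+y3*y3 = 1"
    and o: "x1*y1+x2*y2+x3*y3 = 0" and hp: "p = x1+x2+x3" and hq: "q = y1+y2+y3"
    and pp: "p*p = 3/2" and qq: "q*q = 3/2"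
  shows "1 = p*x1+q*y1 \<and> 1 = p*x2+q*y2 \<and> 1 = p*x3+q*y3"
proof -
  have S: "(1-p*x1-q*y1)^2+(1-p*x2-q*y2)^2+(1-p*x3-q*y3)^2 = 3 - 2*p*(x1+x2+x3) - 2*q*(y1+y2+y3) + (p*p)*(x1*x1+x2*x2+x3*x3) + (q*q)*(y1*y1+y2*y2+y3*y3) + 2*p*q*(x1*y1+x2*y2+x3*y3)"
    by (simp add: algebra_simps power2_eq_square)
  also have "\<dots> = 3 - 2*(p*p) - 2*(q*q) + (p*p) + (q*q)"
    unfolding nx ny o hp[symmetric] hq[symmetric] by (simp add: algebra_simps)
  also have "\<dots> = 0" using pp qq by simp
  finally have S0: "(1-p*x1-q*y1)^2+(1-p*x2-q*y2)^2+(1-p*x3-q*y3)^2 = 0" .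
  have a: "(1-p*x1-q*y1)^2 \<ge> 0" "(1-p*x2-q*y2)^2 \<ge> 0" "(1-p*x3-q*y3)^2 \<ge> 0" by simp_all
  have "(1-p*x1-q*y1)^2 = 0" "(1-p*x2-q*y2)^2 = 0" "(1-p*x3-q*y3)^2 = 0" using S0 a by linarith+
  thus ?thesis by simp
qed

theorem mainTheorem4:
  fixes s1 s2 s3 s4 :: real
  assumes "s1 \<in> {1, -1}" and "s2 \<in> {1, -1}" and "s3 \<in> {1, -1}" and "s4 \<in> {1, -1}"
  shows "\<not> (\<exists>x y :: real^3.
             norm x = 1 \<and> norm y = 1 \<and>
             (v_c \<bullet> x)^2 = 1/2 \<and> (v34 s3 s4 \<bullet> x)^2 = 69/100 \<and>
             (v_c \<bullet> y)^2 = 1/2 \<and> (v12 s1 s2 \<bullet> y)^2 = 32/100 \<and>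
             x \<bullet> y \<in> {0, 1, -1})"
proof
  assume "\<exists>x y :: real^3.
             norm x = 1 \<and> norm y = 1 \<and>
             (v_c \<bullet> x)^2 = 1/2 \<and> (v34 s3 s4 \<bullet> x)^2 = 69/100 \<and>
             (v_c \<bullet> y)^2 = 1/2 \<and> (v12 s1 s2 \<bullet> y)^2 = 32/100 \<and>
             x \<bullet> y \<in> {0, 1, -1}"
  then obtain x y :: "real^3" where nx: "norm x = 1" and ny: "norm y = 1"
    and cx: "(v_c \<bullet> x)^2 = 1/2" and qx: "(v34 s3 s4 \<bullet> x)^2 = 69/100"
    and cy: "(v_c \<bullet> y)^2 = 1/2" and ry: "(v12 s1 s2 \<bullet> y)^2 = 32/100"
    and xy: "x \<bullet> y \<in> {0, 1, -1}" by blast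
  define a :: real where "a = sqrt 3"
  define b :: real where "b = sqrt 2"
  have a2: "a*a = 3" unfolding a_def by simp
  have apos: "a > 0" unfolding a_def by simp
  have b2: "b*b = 2" unfolding b_def by simp
  have ip: "\<And>u v::real^3. u \<bullet> v = (u$1)*(v$1)+(u$2)*(v$2)+(u$3)*(v$3)"
    by (simp add: inner_vec_def sum_3)
  have s23: "sqrt (2/3) = b/a" by (simp add: a_def b_def real_sqrt_divide)
  have vcz: "\<And>z::real^3. v_c \<bullet> z = ((z$1)+(z$2)+(z$3))/a"
    by (simp add: ip v_c_def a_def add_divide_distrib)
  have v34z: "\<And>z::real^3. v34 s3 s4 \<bullet> z = (s3*(z$1)+s4*b*(z$3))/a"
    using apos by (simp add: ip v34_def s23 a_def[symmetric] field_simps)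
  have v12z: "\<And>z::real^3. v12 s1 s2 \<bullet> z = (s1*(z$1)+s2*b*(z$2))/a"
    using apos by (simp add: ip v12_def s23 a_def[symmetric] field_simps)
  have nrm: "\<And>z::real^3. norm z = 1 \<Longrightarrow> (z$1)*(z$1)+(z$2)*(z$2)+(z$3)*(z$3) = 1"
  proof -
    fix z :: "real^3" assume "norm z = 1"
    hence "z \<bullet> z = 1" by (metis power2_norm_eq_inner power_one)
    thus "(z$1)*(z$1)+(z$2)*(z$2)+(z$3)*(z$3) = 1" by (simp add: ip)
  qed
  have sq: "\<And>t. (t/a)^2 = 1/2 \<Longrightarrow> t*t = 3/2"
  proof -
    fix t assume "(t/a)^2 = 1/2"
    hence "t*t/(a*a) = 1/2" by (simp only: power_divide power2_eq_square times_divide_times_eq)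
    hence "t*t/3 = 1/2" unfolding a2 .
    thus "t*t = 3/2" by simp
  qed
  have sq2: "\<And>t c. (t/a)^2 = c \<Longrightarrow> t*t = 3*c"
  proof -
    fix t c assume "(t/a)^2 = c"
    hence "t*t/(a*a) = c" by (simp only: power_divide power2_eq_square times_divide_times_eq)
    hence "t*t/3 = c" unfolding a2 .
    thus "t*t = 3*c" by simp
  qed
  define x1 :: real where "x1 = (x$1)"
  define x2 :: real where "x2 = (x$2)"
  define x3 :: real where "x3 = (x$3)"
  define y1 :: real where "y1 = (y$1)"
  define y2 :: real where "y2 = (y$2)"
  define y3 :: real where "y3 = (y$3)"
  define e :: real where "e = s1 * s2"
  define f :: real where "f = s3 * s4"
  define P :: real where "P = x1+x2+x3"
  define Py :: real where "Py = y1+y2+y3"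
  define Q :: real where "Q = x1+f*b*x3"
  define R :: real where "R = x1+e*b*x2"
  define Ry :: real where "Ry = y1+e*b*y2"
  have s1s: "s1 * s1 = 1" using assms(1) by auto
  have s3s: "s3 * s3 = 1" using assms(3) by auto
  have he: "e = 1 \<or> e = -1" using assms(1,2) unfolding e_def by auto
  have hf: "f = 1 \<or> f = -1" using assms(3,4) unfolding f_def by auto
  have hnx: "x1*x1+x2*x2+x3*x3 = 1" using nrm[OF nx] unfolding x1_def x2_def x3_def .
  have hny: "y1*y1+y2*y2+y3*y3 = 1" using nrm[OF ny] unfolding y1_def y2_def y3_def .
  have hPP: "P*P = 3/2" using sq[of P] cx unfolding vcz P_def x1_def x2_def x3_def by simp
  have hPy: "Py*Py = 3/2" using sq[of Py] cy unfolding vcz Py_def y1_def y2_def y3_def by simp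
  have hQQ: "Q*Q = 207/100"
  proof -
    have q0: "(s3*x1+s4*b*x3)*(s3*x1+s4*b*x3) = 207/100"
      using sq2[of "s3*x1+s4*b*x3" "69/100"] qx unfolding v34z x1_def x3_def by simp
    have "Q = s3*(s3*x1+s4*b*x3)" unfolding Q_def f_def using s3s by (simp add: algebra_simps)
    hence "Q*Q = (s3 * s3)*((s3*x1+s4*b*x3)*(s3*x1+s4*b*x3))" by (simp add: algebra_simps)
    thus ?thesis using q0 s3s by simp
  qed
  have hRy: "Ry*Ry = 96/100"
  proof -
    have q0: "(s1*y1+s2*b*y2)*(s1*y1+s2*b*y2) = 96/100"
      using sq2[of "s1*y1+s2*b*y2" "32/100"] ry unfolding v12z y1_def y2_def by simp
    have "Ry = s1*(s1*y1+s2*b*y2)" unfolding Ry_def e_def using s1s by (simp add: algebra_simps)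
    hence "Ry*Ry = (s1 * s1)*((s1*y1+s2*b*y2)*(s1*y1+s2*b*y2))" by (simp add: algebra_simps)
    thus ?thesis using q0 s1s by simp
  qed
  have xx: "x \<bullet> x = 1" using nx by (metis power2_norm_eq_inner power_one)
  have yy: "y \<bullet> y = 1" using ny by (metis power2_norm_eq_inner power_one)
  have hk: "R = (4/5)*P \<or> R = (-4/5)*P \<or> R = (2/3)*(1+e*b+6/5)*P \<or> R = (2/3)*(1+e*b-6/5)*P"
  proof -
    consider "x \<bullet> y = 0" | "x \<bullet> y = 1" | "x \<bullet> y = -1" using xy by blast
    thus ?thesis
    proof cases
      case 1
      have o: "x1*y1+x2*y2+x3*y3 = 0" using 1 unfolding ip x1_def x2_def x3_def y1_def y2_def y3_def .
      have w: "1 = P*x1+Py*y1 \<and> 1 = P*x2+Py*y2 \<and> 1 = P*x3+Py*y3"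
        by (rule wlem[OF hnx hny o P_def Py_def hPP hPy])
      have "Py*Ry = Py*y1 + e*b*(Py*y2)" unfolding Ry_def by (simp add: algebra_simps)
      also have "\<dots> = (1 - P*x1) + e*b*(1 - P*x2)"
      proof -
        have w1: "Py*y1 = 1 - P*x1" and w2: "Py*y2 = 1 - P*x2" using w by linarith+
        show ?thesis by (simp only: w1 w2)
      qed
      also have "\<dots> = 1 + e*b - P*R" unfolding R_def by (simp add: algebra_simps)
      finally have "Py*Ry = 1 + e*b - P*R" .
      thus ?thesis using kB[OF hPP hRy hPy] by blast
    next
      case 2
      have "(x - y) \<bullet> (x - y) = x \<bullet> x - 2*(x \<bullet> y) + y \<bullet> y"
        by (simp add: inner_diff_left inner_diff_right inner_commute)
      hence "(x - y) \<bullet> (x - y) = 0" using xx yy 2 by simp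
      hence "y = x" by simp
      hence "Ry = R" unfolding Ry_def R_def y1_def y2_def x1_def x2_def by simp
      thus ?thesis using kA[OF _ hPP] hRy by auto
    next
      case 3
      have "(x + y) \<bullet> (x + y) = x \<bullet> x + 2*(x \<bullet> y) + y \<bullet> y"
        by (simp add: inner_add_left inner_add_right inner_commute)
      hence "(x + y) \<bullet> (x + y) = 0" using xx yy 3 by simp
      hence "y = -x" by (simp add: add_eq_0_iff)
      hence "Ry = -R" unfolding Ry_def R_def y1_def y2_def x1_def x2_def by (simp add: algebra_simps)
      hence "R*R = 96/100" using hRy by simp
      thus ?thesis using kA[OF _ hPP] by auto
    qed
  qed
  show False by (rule core[OF b2 he hf hnx P_def Q_def R_def hPP hQQ hk])
qed

end
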